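(* Let $m,k,l$ be nonnegative integers with $k+l\le m$, $\alpha,\beta>-1$, and let $f$ be a function on $[0,1]$ with $\langle f,f\rangle<\infty$ which has derivatives $f^{(i)}(0)$ for $0\le i\le k-1$ and $f^{(i)}(1)$ for $0\le i\le l-1$. Consider the problem of finding $P_m(t)=\sum_{i=0}^m p_iB^m_i(t)$ minimizing $\|f-P_m\|^2=\langle f-P_m,f-P_m\rangle$ subject to $P_m^{(i)}(0)=f^{(i)}(0)$ ($i=0,\ldots,k-1$) and $P_m^{(j)}(1)=f^{(j)}(1)$ ($j=0,\ldots,l-1$). The coefficients of the minimizer are given by \[ p_i=\frac{(m-i)!}{m!}f^{(i)}(0)-\sum_{j=0}^{i-1}(-1)^{i+j}\binom ij p_j\qquad(i=0,1,\ldots,k-1), \] \[ p_{m-i}=(-1)^i\frac{(m-i)!}{m!}f^{(i)}(1)-\sum_{j=1}^{i}(-1)^j\binom ij p_{m-i+j}\qquad(i=0,1,\ldots,l-1), \] \[ p_i=\sum_{j=k}^{m-l}C_{ij}(m,k,l,\alpha,\beta)\,\langle f,B^m_j\rangle-\Big(\sum_{j=0}^{k-1}+\sum_{j=m-l+1}^{m}\Big)p_j\,K_{ij}\qquad(i=k,k+1,\ldots,m-l), \] where $C_{ij}(m,k,l,\alpha,\beta)$ are the B\'ezier coefficients of the constrained dual Bernstein polynomials, $D^{(m,k,l)}_i(x;\alpha,\beta)=\sum_{j=k}^{m-l}C_{ij}(m,k,l,\alpha,\beta)B^m_j(x)$, and for $k\le i\le m-l$ and $j\in\{0,\ldots,k-1\}\cup\{m-l+1,\ldots,m\}$,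 \[ K_{ij}=\binom mj\binom mi^{-1}\frac{(-1)^{i-k}(k-j)_{m-k-l+1}}{(i-j)\,(i-k)!\,(m-l-i)!}\cdot\frac{(\alpha+l+1)_{m-j}(\beta+k+1)_j}{(\alpha+l+1)_{m-i}(\beta+k+1)_i} \] (which equals $\langle B^m_j,D^{(m,k,l)}_i\rangle$).
   Context: For $\alpha,\beta>-1$ define $\langle f,g\rangle:=\int_0^1(1-x)^{\alpha}x^{\beta}f(x)g(x)\,dx$ and $\|g\|^2=\langle g,g\rangle$. Bernstein polynomials: $B^m_i(x)=\binom mi x^i(1-x)^{m-i}$. For $k+l\le m$, $\Pi_m^{(k,l)}$ is the space of polynomials $P$ of degree $\le m$ with $P^{(i)}(0)=0$ for $0\le i\le k-1$ and $P^{(j)}(1)=0$ for $0\le j\le l-1$; it has basis $B^m_k,\ldots,B^m_{m-l}$. The constrained dual Bernstein polynomials $D^{(m,k,l)}_i(x;\alpha,\beta)$, $k\le i\le m-l$, are the unique elements of $\Pi_m^{(k,l)}$ with $\langle D^{(m,k,l)}_i,B^m_j\rangle=\delta_{ij}$ for $i,j=k,\ldots,m-l$. Notation: $(c)_k:=\prod_{j=0}^{k-1}(c+j)$, $(c)_0=1$. *)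

theory Defs
  imports "HOL-Analysis.Analysis" "HOL-Computational_Algebra.Polynomial"
begin

definition jweight :: "real \<Rightarrow> real \<Rightarrow> real \<Rightarrow> real" where
  "jweight \<alpha> \<beta> x = (1 - x) powr \<alpha> * x powr \<beta>"

definition wip :: "real \<Rightarrow> real \<Rightarrow> (real \<Rightarrow> real) \<Rightarrow> (real \<Rightarrow> real) \<Rightarrow> real" where
  "wip \<alpha> \<beta> f g = set_lebesgue_integral lborel {0..1} (\<lambda>x. jweight \<alpha> \<beta> x * f x * g x)"

definition bern :: "nat \<Rightarrow> nat \<Rightarrow> real \<Rightarrow> real" where
  "bern m i x = real (m choose i) * x ^ i * (1 - x) ^ (m - i)"

definition bern_poly :: "nat \<Rightarrow> nat \<Rightarrow> real poly" where
  "bern_poly m i = smult (real (m choose i)) (monom 1 i * [:1, -1:] ^ (m - i))"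

definition bezier_poly :: "nat \<Rightarrow> (nat \<Rightarrow> real) \<Rightarrow> real poly" where
  "bezier_poly m p = (\<Sum>i\<le>m. smult (p i) (bern_poly m i))"

text \<open>Bezier coefficients C_ij(m,k,l,alpha,beta) of the constrained dual Bernstein
  polynomial D^(m,k,l)_i: the unique coefficient vector c supported on {k..m-l}
  with <sum_h c_h B^m_h, B^m_j> = delta_ij for j = k..m-l.\<close>
definition dualC :: "nat \<Rightarrow> nat \<Rightarrow> nat \<Rightarrow> real \<Rightarrow> real \<Rightarrow> nat \<Rightarrow> nat \<Rightarrow> real" where
  "dualC m k l \<alpha> \<beta> i = (THE c.
      (\<forall>h. h \<notin> {k..m-l} \<longrightarrow> c h = 0) \<and>
      (\<forall>j\<in>{k..m-l}. wip \<alpha> \<beta> (\<lambda>x. \<Sum>h=k..m-l. c h * bern m h x) (bern m j)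
                      = (if i = j then 1 else 0)))"

definition Kcoef :: "nat \<Rightarrow> nat \<Rightarrow> nat \<Rightarrow> real \<Rightarrow> real \<Rightarrow> nat \<Rightarrow> nat \<Rightarrow> real" where
  "Kcoef m k l \<alpha> \<beta> i j =
     real (m choose j) / real (m choose i) *
     ((-1) ^ (i - k) * pochhammer (real k - real j) (m - k - l + 1)
        / ((real i - real j) * fact (i - k) * fact (m - l - i))) *
     ((pochhammer (\<alpha> + real l + 1) (m - j) * pochhammer (\<beta> + real k + 1) j)
        / (pochhammer (\<alpha> + real l + 1) (m - i) * pochhammer (\<beta> + real k + 1) i))"

text \<open>Admissible coefficient vectors: the Bezier polynomial matches the prescribed
  derivative values a i = f^(i)(0) (i<k) and b j = f^(j)(1) (j<l).\<close>
definition admissible :: "nat \<Rightarrow> nat \<Rightarrow> nat \<Rightarrow> (nat \<Rightarrow> real) \<Rightarrow> (nat \<Rightarrow> real) \<Rightarrow> (nat \<Rightarrow> real) \<Rightarrow> bool" where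
  "admissible m k l a b p \<longleftrightarrow>
     (\<forall>i<k. poly ((pderiv ^^ i) (bezier_poly m p)) 0 = a i) \<and>
     (\<forall>j<l. poly ((pderiv ^^ j) (bezier_poly m p)) 1 = b j)"

end

theory Submission
  imports Defs "Jordan_Normal_Form.Determinant"
begin


lemma poly_bern_poly[simp]: "poly (bern_poly m i) x = bern m i x"
  by (simp add: bern_poly_def bern_def poly_monom)

lemma poly_bezier: "poly (bezier_poly m p) x = (\<Sum>i\<le>m. p i * bern m i x)"
  by (simp add: bezier_poly_def poly_sum)

lemma coeff_pderiv_funpow:
  "coeff ((pderiv ^^ r) P) n = pochhammer (of_nat (Suc n)) r * coeff (P :: real poly) (n + r)"
proof (induction r arbitrary: n)
  case 0 then show ?case by simp
next
  case (Suc r)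
  have "coeff ((pderiv ^^ Suc r) P) n = of_nat (Suc n) * coeff ((pderiv ^^ r) P) (Suc n)"
    by (simp add: coeff_pderiv)
  also have "\<dots> = of_nat (Suc n) * (pochhammer (of_nat (Suc (Suc n))) r * coeff P (Suc n + r))"
    by (simp add: Suc.IH)
  also have "\<dots> = pochhammer (of_nat (Suc n)) (Suc r) * coeff P (n + Suc r)"
    by (simp add: pochhammer_rec add.commute)
  finally show ?case .
qed

lemma poly0_pderiv_funpow: "poly ((pderiv ^^ r) P) 0 = fact r * coeff (P :: real poly) r"
  by (simp add: poly_0_coeff_0 coeff_pderiv_funpow pochhammer_fact)

lemma coeff_one_minus_power:
  "coeff ([:1, -1:] ^ n :: real poly) s = real (n choose s) * (-1) ^ s"
proof (induction n arbitrary: s)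
  case 0 then show ?case by (cases s) auto
next
  case (Suc n)
  have eq: "[:1, -1:] ^ Suc n = pCons 0 (Polynomial.smult (-1) ([:1, -1:] ^ n)) + ([:1, -1:] ^ n :: real poly)"
    by (simp add: mult_pCons_left add.commute)
  show ?case
  proof (cases s)
    case 0 then show ?thesis by (simp add: eq Suc.IH)
  next
    case (Suc s')
    then show ?thesis by (simp add: eq Suc.IH algebra_simps)
  qed
qed

lemma coeff_bern_poly:
  "coeff (bern_poly m j) r =
     (if j \<le> r then real (m choose j) * real ((m - j) choose (r - j)) * (-1) ^ (r - j) else 0)"
  by (simp add: bern_poly_def coeff_monom_mult coeff_one_minus_power)

lemma coeff_bezier:
  assumes "r \<le> m"
  shows "coeff (bezier_poly m p) r =
     (\<Sum>i\<le>r. p i * (real (m choose r) * real (r choose i) * (-1) ^ (r - i)))"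
proof -
  have "coeff (bezier_poly m p) r = (\<Sum>i\<le>m. p i * coeff (bern_poly m i) r)"
    by (simp add: bezier_poly_def coeff_sum)
  also have "\<dots> = (\<Sum>i\<le>r. p i * coeff (bern_poly m i) r)"
    using assms by (intro sum.mono_neutral_right) (auto simp: coeff_bern_poly)
  also have "\<dots> = (\<Sum>i\<le>r. p i * (real (m choose r) * real (r choose i) * (-1) ^ (r - i)))"
  proof (intro sum.cong refl)
    fix i assume i: "i \<in> {..r}"
    have "(m choose r) * (r choose i) = (m choose i) * ((m - i) choose (r - i))"
      using i assms by (intro choose_mult) auto
    then have "real (m choose i) * real ((m - i) choose (r - i)) = real (m choose r) * real (r choose i)"
      by (metis of_nat_mult)
    then show "p i * coeff (bern_poly m i) r = p i * (real (m choose r) * real (r choose i) * (-1) ^ (r - i))"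
      using i by (simp add: coeff_bern_poly)
  qed
  finally show ?thesis .
qed

lemma deriv0_bezier:
  assumes "r \<le> m"
  shows "poly ((pderiv ^^ r) (bezier_poly m p)) 0 =
     fact m / fact (m - r) * (\<Sum>j\<le>r. (-1) ^ (r - j) * real (r choose j) * p j)"
proof -
  have f: "fact r * real (m choose r) = fact m / fact (m - r)"
    using assms by (simp add: binomial_fact)
  show ?thesis
    unfolding poly0_pderiv_funpow coeff_bezier[OF assms] f[symmetric]
    by (simp add: sum_distrib_left mult_ac)
qed

lemma bern_reflect: "i \<le> m \<Longrightarrow> bern m i (1 - x) = bern m (m - i) x"
  by (simp add: bern_def binomial_symmetric[of i m] mult_ac)

lemma bezier_reflect:
  "pcompose (bezier_poly m p) [:1, -1:] = bezier_poly m (\<lambda>i. p (m - i))"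
proof -
  have "poly (pcompose (bezier_poly m p) [:1, -1:]) x = poly (bezier_poly m (\<lambda>i. p (m - i))) x" for x
  proof -
    have "poly (pcompose (bezier_poly m p) [:1, -1:]) x = (\<Sum>i\<le>m. p i * bern m i (1 - x))"
      by (simp add: poly_pcompose poly_bezier)
    also have "\<dots> = (\<Sum>i\<le>m. p i * bern m (m - i) x)"
      by (intro sum.cong refl) (simp add: bern_reflect)
    also have "\<dots> = (\<Sum>i\<le>m. p (m - i) * bern m i x)"
      by (rule sum.reindex_bij_witness[of _ "\<lambda>i. m - i" "\<lambda>i. m - i"]) auto
    finally show ?thesis by (simp add: poly_bezier)
  qed
  then show ?thesis by (intro poly_eq_poly_eq_iff[THEN iffD1]) auto
qed

lemma pderiv_funpow_reflect:
  "(pderiv ^^ r) (pcompose P [:1, -1:]) = Polynomial.smult ((-1) ^ r) (pcompose ((pderiv ^^ r) (P :: real poly)) [:1, -1:])"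
proof (induction r)
  case 0 then show ?case by simp
next
  case (Suc r)
  show ?case
    by (simp add: Suc.IH pderiv_smult pderiv_pcompose pderiv_pCons)
qed

lemma deriv1_bezier:
  assumes "r \<le> m"
  shows "poly ((pderiv ^^ r) (bezier_poly m p)) 1 =
     (-1) ^ r * (fact m / fact (m - r) * (\<Sum>j\<le>r. (-1) ^ (r - j) * real (r choose j) * p (m - j)))"
proof -
  have h0: "poly ((pderiv ^^ r) (bezier_poly m (\<lambda>i. p (m - i)))) 0 = (-1) ^ r * poly ((pderiv ^^ r) (bezier_poly m p)) 1"
    by (simp add: bezier_reflect[symmetric] pderiv_funpow_reflect poly_pcompose)
  have "poly ((pderiv ^^ r) (bezier_poly m p)) 1 = (-1) ^ r * poly ((pderiv ^^ r) (bezier_poly m (\<lambda>i. p (m - i)))) 0"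
  proof -
    have "(-1::real) ^ r * (-1) ^ r = 1" by (simp add: power_mult_distrib[symmetric])
    then show ?thesis unfolding h0 by (metis mult.assoc mult_1)
  qed
  then show ?thesis by (simp add: deriv0_bezier[OF assms])
qed


lemma neg1_pow_plus: "j \<le> i \<Longrightarrow> (-1::real) ^ (i + j) = (-1) ^ (i - j)"
proof -
  assume "j \<le> i"
  then have h: "i + j = (i - j) + 2 * j" by simp
  show ?thesis by (subst h, simp only: power_add power_mult) simp
qed

lemma part1:
  assumes adm: "admissible m k l a b p" and i: "i < k" and km: "k \<le> m"
  shows "p i = fact (m - i) / fact m * a i - (\<Sum>j<i. (-1) ^ (i + j) * real (i choose j) * p j)"
proof -
  have im: "i \<le> m" using i km by simp
  have "a i = fact m / fact (m - i) * (\<Sum>j\<le>i. (-1) ^ (i - j) * real (i choose j) * p j)"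
    using adm i deriv0_bezier[OF im, of p] unfolding admissible_def by auto
  also have "(\<Sum>j\<le>i. (-1) ^ (i - j) * real (i choose j) * p j) =
       p i + (\<Sum>j<i. (-1) ^ (i + j) * real (i choose j) * p j)"
  proof -
    have "(\<Sum>j\<le>i. (-1) ^ (i - j) * real (i choose j) * p j) =
       (\<Sum>j\<in>insert i {..<i}. (-1) ^ (i - j) * real (i choose j) * p j)"
      by (intro sum.cong) auto
    also have "\<dots> = p i + (\<Sum>j<i. (-1) ^ (i - j) * real (i choose j) * p j)"
      by (subst sum.insert) auto
    also have "(\<Sum>j<i. (-1) ^ (i - j) * real (i choose j) * p j) = (\<Sum>j<i. (-1) ^ (i + j) * real (i choose j) * p j)"
      by (intro sum.cong) (auto simp: neg1_pow_plus)
    finally show ?thesis .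
  qed
  finally have "a i = fact m / fact (m - i) * (p i + (\<Sum>j<i. (-1) ^ (i + j) * real (i choose j) * p j))" .
  then show ?thesis by (simp add: field_simps)
qed

lemma part2:
  assumes adm: "admissible m k l a b p" and i: "i < l" and lm: "l \<le> m"
  shows "p (m - i) = (-1) ^ i * fact (m - i) / fact m * b i
           - (\<Sum>j=1..i. (-1) ^ j * real (i choose j) * p (m - i + j))"
proof -
  have im: "i \<le> m" using i lm by simp
  have "b i = (-1) ^ i * (fact m / fact (m - i) * (\<Sum>j\<le>i. (-1) ^ (i - j) * real (i choose j) * p (m - j)))"
    using adm i deriv1_bezier[OF im, of p] unfolding admissible_def by auto
  also have "(\<Sum>j\<le>i. (-1) ^ (i - j) * real (i choose j) * p (m - j)) =
       (\<Sum>j\<le>i. (-1) ^ j * real (i choose j) * p (m - i + j))"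
    by (rule sum.reindex_bij_witness[of _ "\<lambda>j. i - j" "\<lambda>j. i - j"])
       (use im in \<open>auto simp: binomial_symmetric[symmetric]\<close>)
  also have "\<dots> = p (m - i) + (\<Sum>j=1..i. (-1) ^ j * real (i choose j) * p (m - i + j))"
    by (simp add: atMost_atLeast0 sum.atLeast_Suc_atMost)
  finally have eq: "b i = (-1) ^ i * (fact m / fact (m - i) * (p (m - i) + (\<Sum>j=1..i. (-1) ^ j * real (i choose j) * p (m - i + j))))" .
  have s1: "(-1::real) ^ i * (-1) ^ i = 1" by (simp add: power_mult_distrib[symmetric])
  have "(-1) ^ i * b i = ((-1) ^ i * (-1) ^ i) * (fact m / fact (m - i) * (p (m - i) + (\<Sum>j=1..i. (-1) ^ j * real (i choose j) * p (m - i + j))))"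
    unfolding eq by (simp only: mult.assoc)
  then have "(-1) ^ i * b i = fact m / fact (m - i) * (p (m - i) + (\<Sum>j=1..i. (-1) ^ j * real (i choose j) * p (m - i + j)))"
    unfolding s1 by simp
  then show ?thesis by (simp add: field_simps)
qed

lemma adm_perturb:
  assumes adm: "admissible m k l a b p" and j: "j \<in> {k..m-l}" and klm: "k + l \<le> m"
  shows "admissible m k l a b (\<lambda>s. p s + (if s = j then t else 0))"
  unfolding admissible_def
proof (intro conjI allI impI)
  fix i assume i: "i < k"
  have im: "i \<le> m" using i klm by simp
  have "(\<Sum>s\<le>i. (-1) ^ (i - s) * real (i choose s) * (p s + (if s = j then t else 0)))
      = (\<Sum>s\<le>i. (-1) ^ (i - s) * real (i choose s) * p s)"
    using i j by (intro sum.cong) auto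
  moreover have "poly ((pderiv ^^ i) (bezier_poly m p)) 0 = a i"
    using adm i unfolding admissible_def by simp
  ultimately show "poly ((pderiv ^^ i) (bezier_poly m (\<lambda>s. p s + (if s = j then t else 0)))) 0 = a i"
    by (simp only: deriv0_bezier[OF im])
next
  fix i assume i: "i < l"
  have im: "i \<le> m" using i klm by simp
  have "(\<Sum>s\<le>i. (-1) ^ (i - s) * real (i choose s) * (p (m - s) + (if m - s = j then t else 0)))
      = (\<Sum>s\<le>i. (-1) ^ (i - s) * real (i choose s) * p (m - s))"
    using i j klm by (intro sum.cong) auto
  moreover have "poly ((pderiv ^^ i) (bezier_poly m p)) 1 = b i"
    using adm i unfolding admissible_def by simp
  ultimately show "poly ((pderiv ^^ i) (bezier_poly m (\<lambda>s. p s + (if s = j then t else 0)))) 1 = b i"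
    by (simp only: deriv1_bezier[OF im])
qed

lemma funpow_pderiv_0: "(pderiv ^^ i) (0 :: real poly) = 0"
  by (induction i) auto

lemma bezier_zero:
  assumes "bezier_poly m c = 0"
  shows "\<forall>i\<le>m. c i = 0"
proof (intro allI impI)
  fix i assume "i \<le> m"
  then show "c i = 0"
  proof (induction i rule: less_induct)
    case (less i)
    have "0 = poly ((pderiv ^^ i) (bezier_poly m c)) 0" using assms by (simp add: funpow_pderiv_0)
    also have "\<dots> = fact m / fact (m - i) * (\<Sum>j\<le>i. (-1) ^ (i - j) * real (i choose j) * c j)"
      by (rule deriv0_bezier) (use less in auto)
    also have "(\<Sum>j\<le>i. (-1) ^ (i - j) * real (i choose j) * c j) = 
       (\<Sum>j\<in>insert i {..<i}. (-1) ^ (i - j) * real (i choose j) * c j)"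
      by (intro sum.cong) auto
    also have "\<dots> = c i"
      using less by (subst sum.insert) auto
    finally show ?case by simp
  qed
qed


lemma jweight_meas[measurable]: "jweight a b \<in> borel_measurable borel"
  unfolding jweight_def by measurable

lemma jweight_nonneg: "jweight a b x \<ge> 0"
  unfolding jweight_def by simp

lemma jweight_int:
  assumes "a > -1" "b > -1"
  shows "integrable lborel (\<lambda>x. indicator {0..1} x * jweight a b x)"
proof -
  have "set_integrable lborel {0..1} (\<lambda>t. t powr ((b+1) - 1) * (1 - t) powr ((a+1) - 1))"
    by (rule integrable_Beta) (use assms in auto)
  then show ?thesis unfolding set_integrable_def jweight_def
    by (simp add: mult_ac)
qed

lemma cont_bound:
  fixes g :: "real \<Rightarrow> real"
  assumes "continuous_on {0..1::real} g"
  obtains B where "\<And>x. x \<in> {0..1} \<Longrightarrow> \<bar>g x\<bar> \<le> B"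
proof -
  have "bounded (g ` {0..1})"
    by (rule compact_imp_bounded[OF compact_continuous_image[OF assms]]) simp
  then obtain B where "\<forall>y\<in>g ` {0..1}. norm y \<le> B" by (auto simp: bounded_iff)
  then show ?thesis using that[of B] by auto
qed

lemma wint_cont:
  fixes g :: "real \<Rightarrow> real"
  assumes "a > -1" "b > -1" "continuous_on UNIV g"
  shows "integrable lborel (\<lambda>x. indicator {0..1} x * (jweight a b x * g x))"
proof -
  have gm: "g \<in> borel_measurable borel" by (rule borel_measurable_continuous_onI[OF assms(3)])
  obtain B where B: "\<And>x. x \<in> {0..1} \<Longrightarrow> \<bar>g x\<bar> \<le> B"
    using cont_bound[of g] continuous_on_subset[OF assms(3)] by blast
  have "integrable lborel (\<lambda>x. B * (indicator {0..1} x * jweight a b x))"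
    by (intro integrable_mult_right jweight_int assms)
  then show ?thesis
  proof (rule Bochner_Integration.integrable_bound)
    show "(\<lambda>x. indicator {0..1} x * (jweight a b x * g x)) \<in> borel_measurable lborel"
      using gm by measurable
    show "AE x in lborel. norm (indicator {0..1} x * (jweight a b x * g x))
          \<le> norm (B * (indicator {0..1} x * jweight a b x))"
    proof (intro AE_I2)
      fix x :: real
      show "norm (indicator {0..1} x * (jweight a b x * g x))
          \<le> norm (B * (indicator {0..1} x * jweight a b x))"
      proof (cases "x \<in> {0..1}")
        case True
        have "\<bar>jweight a b x * g x\<bar> \<le> \<bar>B * jweight a b x\<bar>"
          using B[OF True] jweight_nonneg[of a b x]
          by (simp add: abs_mult mult_right_mono mult.commute)
        then show ?thesis using True by simp
      qed simp
    qed
  qed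
qed


definition wint :: "real \<Rightarrow> real \<Rightarrow> (real \<Rightarrow> real) \<Rightarrow> bool" where
  "wint a b h \<longleftrightarrow> integrable lborel (\<lambda>x. indicator {0..1::real} x * (jweight a b x * h x))"

definition wI :: "real \<Rightarrow> real \<Rightarrow> (real \<Rightarrow> real) \<Rightarrow> real" where
  "wI a b h = integral\<^sup>L lborel (\<lambda>x. indicator {0..1::real} x * (jweight a b x * h x))"

lemma wip_wI: "wip a b f g = wI a b (\<lambda>x. f x * g x)"
  by (simp add: wip_def wI_def set_lebesgue_integral_def mult.assoc)

lemma wint_add: "wint a b f \<Longrightarrow> wint a b g \<Longrightarrow> wint a b (\<lambda>x. f x + g x)"
  unfolding wint_def by (drule (1) Bochner_Integration.integrable_add) (simp add: algebra_simps)

lemma wint_diff: "wint a b f \<Longrightarrow> wint a b g \<Longrightarrow> wint a b (\<lambda>x. f x - g x)"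
  unfolding wint_def by (drule (1) Bochner_Integration.integrable_diff) (simp add: algebra_simps)

lemma wint_cmult: "wint a b f \<Longrightarrow> wint a b (\<lambda>x. c * f x)"
proof -
  assume "wint a b f"
  then have "integrable lborel (\<lambda>x. c * (indicator {0..1::real} x * (jweight a b x * f x)))"
    unfolding wint_def by (rule integrable_mult_right)
  then show ?thesis unfolding wint_def by (simp add: algebra_simps)
qed

lemma wint_sum: "(\<And>i. i \<in> S \<Longrightarrow> wint a b (f i)) \<Longrightarrow> wint a b (\<lambda>x. \<Sum>i\<in>S. f i x)"
  unfolding wint_def by (drule Bochner_Integration.integrable_sum) (simp add: sum_distrib_left)

lemma wI_add: "wint a b f \<Longrightarrow> wint a b g \<Longrightarrow> wI a b (\<lambda>x. f x + g x) = wI a b f + wI a b g"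
  unfolding wint_def wI_def by (subst Bochner_Integration.integral_add[symmetric]) (auto simp: algebra_simps)

lemma wI_diff: "wint a b f \<Longrightarrow> wint a b g \<Longrightarrow> wI a b (\<lambda>x. f x - g x) = wI a b f - wI a b g"
  unfolding wint_def wI_def by (subst Bochner_Integration.integral_diff[symmetric]) (auto simp: algebra_simps)

lemma wI_cmult: "wI a b (\<lambda>x. c * f x) = c * wI a b f"
  unfolding wI_def by (subst integral_mult_right_zero[symmetric]) (simp add: algebra_simps)

lemma wI_sum: "(\<And>i. i \<in> S \<Longrightarrow> wint a b (f i)) \<Longrightarrow> wI a b (\<lambda>x. \<Sum>i\<in>S. f i x) = (\<Sum>i\<in>S. wI a b (f i))"
  unfolding wint_def wI_def by (subst Bochner_Integration.integral_sum[symmetric]) (auto simp: sum_distrib_left)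

lemma wint_cont': "a > -1 \<Longrightarrow> b > -1 \<Longrightarrow> continuous_on UNIV g \<Longrightarrow> wint a b g"
  unfolding wint_def by (rule wint_cont)

lemma wint_prod:
  fixes h1 h2 :: "real \<Rightarrow> real"
  assumes m1: "h1 \<in> borel_measurable borel" and m2: "h2 \<in> borel_measurable borel"
    and i1: "wint a b (\<lambda>x. h1 x * h1 x)" and i2: "wint a b (\<lambda>x. h2 x * h2 x)"
  shows "wint a b (\<lambda>x. h1 x * h2 x)"
proof -
  have "wint a b (\<lambda>x. h1 x * h1 x + h2 x * h2 x)" by (rule wint_add[OF i1 i2])
  then have int: "integrable lborel (\<lambda>x. indicator {0..1::real} x * (jweight a b x * (h1 x * h1 x + h2 x * h2 x)))"
    by (simp add: wint_def)
  show ?thesis unfolding wint_def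
  proof (rule Bochner_Integration.integrable_bound[OF int])
    show "(\<lambda>x. indicator {0..1} x * (jweight a b x * (h1 x * h2 x))) \<in> borel_measurable lborel"
      using m1 m2 by measurable
    show "AE x in lborel. norm (indicator {0..1} x * (jweight a b x * (h1 x * h2 x)))
          \<le> norm (indicator {0..1::real} x * (jweight a b x * (h1 x * h1 x + h2 x * h2 x)))"
    proof (intro AE_I2)
      fix x :: real
      have w: "jweight a b x \<ge> 0" by (rule jweight_nonneg)
      have "\<bar>h1 x * h2 x\<bar> \<le> h1 x * h1 x + h2 x * h2 x"
      proof -
        have sq: "0 \<le> (\<bar>h1 x\<bar> - \<bar>h2 x\<bar>) * (\<bar>h1 x\<bar> - \<bar>h2 x\<bar>)" by simp
        have "(\<bar>h1 x\<bar> - \<bar>h2 x\<bar>) * (\<bar>h1 x\<bar> - \<bar>h2 x\<bar>) = h1 x * h1 x + h2 x * h2 x - 2 * (\<bar>h1 x\<bar> * \<bar>h2 x\<bar>)"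
          by (simp add: algebra_simps abs_mult_self_eq)
        with sq have "2 * (\<bar>h1 x\<bar> * \<bar>h2 x\<bar>) \<le> h1 x * h1 x + h2 x * h2 x" by linarith
        moreover have "0 \<le> \<bar>h1 x\<bar> * \<bar>h2 x\<bar>" by simp
        ultimately show ?thesis unfolding abs_mult by linarith
      qed
      then have "\<bar>jweight a b x * (h1 x * h2 x)\<bar> \<le> \<bar>jweight a b x * (h1 x * h1 x + h2 x * h2 x)\<bar>"
        using w by (simp add: abs_mult mult_left_mono)
      then show "norm (indicator {0..1} x * (jweight a b x * (h1 x * h2 x)))
          \<le> norm (indicator {0..1::real} x * (jweight a b x * (h1 x * h1 x + h2 x * h2 x)))"
        by (cases "x \<in> {0..1}") auto
    qed
  qed
qed

lemma wI_sq_nonneg: "wI a b (\<lambda>x. h x * h x) \<ge> 0"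
  unfolding wI_def by (intro integral_nonneg_AE AE_I2) (auto simp: jweight_nonneg indicator_def)

lemma jweight_pos: "0 < x \<Longrightarrow> x < 1 \<Longrightarrow> jweight a b x > 0"
  by (simp add: jweight_def)

lemma wI_sq_zero:
  assumes a: "a > -1" and b: "b > -1" and z: "wI a b (\<lambda>x. poly q x * poly q x) = 0"
  shows "q = 0"
proof (rule ccontr)
  assume q: "q \<noteq> 0"
  have cont: "continuous_on UNIV (\<lambda>x. poly q x * poly q x)" by (intro continuous_intros)
  have int: "integrable lborel (\<lambda>x. indicator {0..1::real} x * (jweight a b x * (poly q x * poly q x)))"
    using wint_cont[OF a b cont] .
  have "AE x in lborel. indicator {0..1::real} x * (jweight a b x * (poly q x * poly q x)) = 0"
    using z unfolding wI_def
    by (subst (asm) integral_nonneg_eq_0_iff_AE[OF int]) (auto intro!: AE_I2 simp: jweight_nonneg indicator_def)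
  moreover have "AE x in lborel. x \<notin> {x. poly q x = 0}"
    by (intro AE_not_in countable_imp_null_set_lborel countable_finite poly_roots_finite q)
  ultimately have "AE x in lborel. x \<notin> {0<..<1::real}"
  proof eventually_elim
    case (elim x)
    show ?case
    proof
      assume x: "x \<in> {0<..<1}"
      then have "jweight a b x > 0" by (intro jweight_pos) auto
      moreover have "poly q x * poly q x > 0" using elim(2) by (auto simp add: zero_less_mult_iff linorder_neq_iff)
      ultimately have "jweight a b x * (poly q x * poly q x) > 0" by simp
      moreover have "indicator {0..1::real} x = (1::real)" using x by (simp add: indicator_def)
      then have "jweight a b x * (poly q x * poly q x) = 0" using elim(1) by (simp only: mult_1)
      ultimately show False by linarith
    qed
  qed
  then have "emeasure lborel {0<..<1::real} = 0"
    by (subst (asm) AE_iff_measurable[of "{0<..<1}"]) auto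
  then show False using emeasure_lborel_Ioo[of 0 "1::real"] by simp
qed

lemma wI_beta:
  assumes a: "a > -1" and b: "b > -1"
  shows "wI a b (\<lambda>x. x ^ p * (1 - x) ^ q) = Beta (b + real p + 1) (a + real q + 1)"
proof -
  define F where "F = (\<lambda>t::real. t powr ((b + real p + 1) - 1) * (1 - t) powr ((a + real q + 1) - 1))"
  have pos1: "b + real p + 1 > 0" and pos2: "a + real q + 1 > 0" using a b by auto
  have si: "set_integrable lborel {0..1} F" unfolding F_def by (rule integrable_Beta[OF pos1 pos2])
  have hi: "(F has_integral Beta (b + real p + 1) (a + real q + 1)) {0..1}"
    unfolding F_def by (rule has_integral_Beta_real[OF pos1 pos2])
  have pw: "jweight a b x * (x ^ p * (1 - x) ^ q) = F x" if x: "x \<in> {0..1}" for x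
  proof -
    consider "x = 0" | "x = 1" | "0 < x \<and> x < 1" using x by fastforce
    then show ?thesis
    proof cases
      case 3
      then have "x ^ p = x powr real p" "(1 - x) ^ q = (1 - x) powr real q"
        by (simp_all add: powr_realpow)
      then show ?thesis using 3 by (simp add: F_def jweight_def powr_add mult_ac)
    qed (use pos1 pos2 in \<open>auto simp: F_def jweight_def\<close>)
  qed
  have "wI a b (\<lambda>x. x ^ p * (1 - x) ^ q) = integral\<^sup>L lborel (\<lambda>x. indicator {0..1} x *\<^sub>R F x)"
    unfolding wI_def by (intro Bochner_Integration.integral_cong refl) (auto simp: indicator_def pw)
  also have "\<dots> = integral {0..1} F"
    using set_borel_integral_eq_integral(2)[OF si] by (simp add: set_lebesgue_integral_def)
  also have "\<dots> = Beta (b + real p + 1) (a + real q + 1)" using hi by (simp add: integral_unique)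
  finally show ?thesis .
qed


lemma prod_all_shift: "(\<Prod>s<n. (y - real s)) = (-1) ^ n * pochhammer (-y) n"
proof -
  have "pochhammer (-y) n = (\<Prod>s<n. - (y - real s))"
    by (simp add: pochhammer_prod lessThan_atLeast0)
  also have "\<dots> = (-1) ^ n * (\<Prod>s<n. (y - real s))"
    by (simp only: prod_uminus card_lessThan)
  finally have "(-1) ^ n * pochhammer (-y) n = (-1) ^ n * ((-1) ^ n * (\<Prod>s<n. (y - real s)))" by simp
  also have "\<dots> = (\<Prod>s<n. (y - real s))"
    by (simp add: mult.assoc[symmetric] power_mult_distrib[symmetric])
  finally show ?thesis by simp
qed

lemma prod_low: "(\<Prod>s<r. (real r - real s)) = fact r"
proof -
  have "(\<Prod>s<r. (real r - real s)) = (\<Prod>s<r. real (r - s))"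
    by (intro prod.cong) (auto simp: of_nat_diff)
  also have "\<dots> = real (\<Prod>s<r. r - s)" by simp
  also have "\<dots> = fact r" by (simp add: fact_prod_rev lessThan_atLeast0)
  finally show ?thesis .
qed

lemma prod_high:
  assumes "r < n"
  shows "(\<Prod>s\<in>{Suc r..<n}. (real r - real s)) = (-1) ^ (n - 1 - r) * fact (n - 1 - r)"
proof -
  have "(\<Prod>s\<in>{Suc r..<n}. (real r - real s)) = (\<Prod>j<n - 1 - r. - (real j + 1))"
    by (rule prod.reindex_bij_witness[of _ "\<lambda>j. Suc r + j" "\<lambda>s. s - Suc r"]) (use assms in auto)
  also have "\<dots> = (-1) ^ (n - 1 - r) * (\<Prod>j<n - 1 - r. (real j + 1))"
    by (simp only: prod_uminus card_lessThan)
  also have "(\<Prod>j<n - 1 - r. (real j + 1)) = fact (n - 1 - r)"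
    by (simp add: pochhammer_fact pochhammer_prod lessThan_atLeast0 add.commute)
  finally show ?thesis .
qed

lemma prod_D:
  assumes "r < n"
  shows "(\<Prod>s\<in>{..<n}-{r}. (real r - real s)) = (-1) ^ (n - 1 - r) * fact r * fact (n - 1 - r)"
proof -
  have e: "{..<n}-{r} = {..<r} \<union> {Suc r..<n}" using assms by auto
  have "(\<Prod>s\<in>{..<n}-{r}. (real r - real s)) = (\<Prod>s<r. (real r - real s)) * (\<Prod>s\<in>{Suc r..<n}. (real r - real s))"
    unfolding e by (subst prod.union_disjoint) auto
  then show ?thesis using prod_low[of r] prod_high[OF assms] by simp
qed

lemma lagrange:
  fixes Q :: "real poly"
  assumes deg: "degree Q < n" and y: "\<forall>r<n. y \<noteq> real r"
  shows "poly Q y = (\<Sum>r<n. poly Q (real r) * (-1) ^ r * pochhammer (-y) n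
                         / ((real r - y) * fact r * fact (n - 1 - r)))"
proof -
  define D where "D r = (\<Prod>s\<in>{..<n}-{r}. (real r - real s))" for r
  define ell where "ell r = (\<Prod>s\<in>{..<n}-{r}. [:- real s, 1:])" for r
  define L where "L = (\<Sum>r<n. Polynomial.smult (poly Q (real r) / D r) (ell r))"
  have Dnz: "D r \<noteq> 0" if "r < n" for r
    using prod_D[OF that] by (simp add: D_def)
  have poly_ell: "poly (ell r) x = (\<Prod>s\<in>{..<n}-{r}. (x - real s))" for r x
    by (simp add: ell_def poly_prod)
  have deg_ell: "degree (ell r) \<le> n - 1" if "r < n" for r
  proof -
    have "degree (ell r) \<le> sum (degree \<circ> (\<lambda>s. [:- real s, 1:])) ({..<n}-{r})"
      unfolding ell_def by (rule degree_prod_sum_le) simp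
    also have "\<dots> = card ({..<n}-{r})" by simp
    also have "\<dots> = n - 1" using that by simp
    finally show ?thesis .
  qed
  have degL: "degree L \<le> n - 1"
    unfolding L_def
    by (intro degree_sum_le ballI order.trans[OF degree_smult_le] deg_ell) auto
  have nodes: "poly L (real r0) = poly Q (real r0)" if r0: "r0 < n" for r0
  proof -
    have "poly L (real r0) = (\<Sum>r<n. poly Q (real r) / D r * poly (ell r) (real r0))"
      by (simp add: L_def poly_sum)
    also have "\<dots> = poly Q (real r0) / D r0 * poly (ell r0) (real r0)
                     + (\<Sum>r\<in>{..<n}-{r0}. poly Q (real r) / D r * poly (ell r) (real r0))"
      using r0 by (subst sum.remove[of _ r0]) auto
    also have "(\<Sum>r\<in>{..<n}-{r0}. poly Q (real r) / D r * poly (ell r) (real r0)) = 0"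
    proof (intro sum.neutral ballI)
      fix r assume r: "r \<in> {..<n}-{r0}"
      have "poly (ell r) (real r0) = 0"
        unfolding poly_ell using r r0 by (intro prod_zero) auto
      then show "poly Q (real r) / D r * poly (ell r) (real r0) = 0" by simp
    qed
    also have "poly (ell r0) (real r0) = D r0" by (simp add: poly_ell D_def)
    finally show ?thesis using Dnz[OF r0] by simp
  qed
  have QL: "Q = L"
  proof (rule ccontr)
    assume "Q \<noteq> L"
    then have R: "Q - L \<noteq> 0" by simp
    have sub: "real ` {..<n} \<subseteq> {x. poly (Q - L) x = 0}" using nodes by auto
    have "n = card (real ` {..<n})" by (simp add: card_image)
    also have "\<dots> \<le> card {x. poly (Q - L) x = 0}"
      by (intro card_mono poly_roots_finite R sub)
    also have "\<dots> \<le> degree (Q - L)" by (rule card_poly_roots_bound[OF R])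
    also have "\<dots> \<le> max (degree Q) (degree L)" by (rule degree_diff_le_max)
    also have "\<dots> < n" using deg degL by auto
    finally show False by simp
  qed
  have "poly Q y = (\<Sum>r<n. poly Q (real r) / D r * poly (ell r) y)"
    by (subst QL) (simp add: L_def poly_sum)
  also have "\<dots> = (\<Sum>r<n. poly Q (real r) * (-1) ^ r * pochhammer (-y) n
                         / ((real r - y) * fact r * fact (n - 1 - r)))"
  proof (intro sum.cong refl)
    fix r assume r: "r \<in> {..<n}"
    then have rn: "r < n" by simp
    have yr: "y - real r \<noteq> 0" using y rn by auto
    have "(\<Prod>s<n. (y - real s)) = (y - real r) * (\<Prod>s\<in>{..<n}-{r}. (y - real s))"
      using r by (subst prod.remove[of _ r]) auto
    then have ell_y: "poly (ell r) y = (-1) ^ n * pochhammer (-y) n / (y - real r)"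
      using yr by (simp add: poly_ell prod_all_shift field_simps)
    have sgn: "(-1::real) ^ n = (-1) ^ (n - 1 - r) * (-1) ^ r * (-1)"
    proof -
      have "n = (n - 1 - r) + r + 1" using rn by simp
      then have "(-1::real) ^ n = (-1) ^ ((n - 1 - r) + r + 1)" by (metis)
      then show ?thesis by (simp only: power_add power_one_right)
    qed
    have ne: "(-1::real) ^ (n - 1 - r) \<noteq> 0" by simp
    have ry: "real r - y = - (y - real r)" by simp
    show "poly Q (real r) / D r * poly (ell r) y = poly Q (real r) * (-1) ^ r * pochhammer (-y) n
                         / ((real r - y) * fact r * fact (n - 1 - r))"
      unfolding ell_y D_def prod_D[OF rn] sgn ry using ne yr
      by (simp add: field_simps)
  qed
  finally show ?thesis .
qed


lemma gram_solve:
  fixes M :: "nat \<Rightarrow> nat \<Rightarrow> real" and e :: "nat \<Rightarrow> real"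
  assumes inj: "\<And>v. (\<forall>j<n. (\<Sum>b<n. v b * M b j) = 0) \<Longrightarrow> \<forall>b<n. v b = 0"
  shows "\<exists>v. \<forall>j<n. (\<Sum>b<n. v b * M b j) = e j"
proof -
  define A where "A = mat n n (\<lambda>(a, b). M b a)"
  have A: "A \<in> carrier_mat n n" by (simp add: A_def)
  have Av: "(A *\<^sub>v u) $ a = (\<Sum>b<n. u $ b * M b a)" if "u \<in> carrier_vec n" "a < n" for u a
    using that by (simp add: A_def scalar_prod_def lessThan_atLeast0 mult.commute)
  have d: "Determinant.det A \<noteq> 0"
  proof
    assume "Determinant.det A = 0"
    then obtain u where u: "u \<in> carrier_vec n" "u \<noteq> 0\<^sub>v n" "A *\<^sub>v u = 0\<^sub>v n"
      using det_0_iff_vec_prod_zero_field[OF A] by blast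
    have "\<forall>j<n. (\<Sum>b<n. u $ b * M b j) = 0"
    proof (intro allI impI)
      fix j assume j: "j < n"
      have "(\<Sum>b<n. u $ b * M b j) = (A *\<^sub>v u) $ j" using Av[OF u(1) j] by simp
      also have "\<dots> = 0" using u(3) j by simp
      finally show "(\<Sum>b<n. u $ b * M b j) = 0" .
    qed
    then have "\<forall>b<n. u $ b = 0" by (rule inj)
    then have "u = 0\<^sub>v n" using u(1) by (intro eq_vecI) auto
    with u(2) show False by simp
  qed
  define B where "B = (1 / Determinant.det A) \<cdot>\<^sub>m adj_mat A"
  have B: "B \<in> carrier_mat n n" using adj_mat(1)[OF A] by (simp add: B_def)
  have AB: "A * B = 1\<^sub>m n"
  proof -
    have "A * B = (1 / Determinant.det A) \<cdot>\<^sub>m (A * adj_mat A)"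
      unfolding B_def by (rule mult_smult_distrib[OF A adj_mat(1)[OF A]])
    also have "\<dots> = (1 / Determinant.det A) \<cdot>\<^sub>m (Determinant.det A \<cdot>\<^sub>m 1\<^sub>m n)"
      by (simp add: adj_mat(2)[OF A])
    also have "\<dots> = 1\<^sub>m n" using d by (intro eq_matI) auto
    finally show ?thesis .
  qed
  define E where "E = vec n e"
  define u where "u = B *\<^sub>v E"
  have u: "u \<in> carrier_vec n" using B by (simp add: u_def E_def)
  have "A *\<^sub>v u = E"
  proof -
    have Ec: "E \<in> carrier_vec n" by (simp add: E_def)
    have "A *\<^sub>v u = (A * B) *\<^sub>v E" unfolding u_def by (rule assoc_mult_mat_vec[symmetric, OF A B Ec])
    also have "\<dots> = E" using Ec by (simp add: AB)
    finally show ?thesis .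
  qed
  then have "\<forall>j<n. (\<Sum>b<n. u $ b * M b j) = e j"
    using Av[OF u] by (simp add: E_def)
  then show ?thesis by blast
qed


lemma poly_pochhammer: "poly (pochhammer p n) x = pochhammer (poly p x) n" for p :: "real poly"
  by (induction n) (simp_all add: pochhammer_Suc of_nat_poly)

lemma degree_pochhammer: "degree p \<le> 1 \<Longrightarrow> degree (pochhammer p n) \<le> n" for p :: "real poly"
proof (induction n)
  case 0 then show ?case by simp
next
  case (Suc n)
  have "degree (pochhammer p (Suc n)) \<le> degree (pochhammer p n) + degree (p + of_nat n)"
    unfolding pochhammer_Suc by (rule degree_mult_le)
  also have "degree (p + of_nat n) \<le> 1"
    using Suc.prems by (intro order.trans[OF degree_add_le_max]) (auto simp: of_nat_poly)
  finally show ?case using Suc by simp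
qed

lemma K_identity:
  fixes \<alpha> \<beta> :: real
  assumes \<alpha>: "\<alpha> > -1" and \<beta>: "\<beta> > -1" and klm: "k + l \<le> m" and hm: "h \<le> m"
    and hS: "h \<notin> {k..m-l}" and tS: "t \<in> {k..m-l}"
  shows "real (m choose h) * pochhammer (\<beta> + real k + 1) (h + t - k) * pochhammer (\<alpha> + real l + 1) (2 * m - h - t - l)
     = (\<Sum>i=k..m-l. Kcoef m k l \<alpha> \<beta> i h * real (m choose i) * pochhammer (\<beta> + real k + 1) (i + t - k)
            * pochhammer (\<alpha> + real l + 1) (2 * m - i - t - l))"
proof -
  define a0 where "a0 = \<beta> + real k + 1"
  define b0 where "b0 = \<alpha> + real l + 1"
  define n where "n = m - k - l + 1"
  have a0: "a0 > 0" and b0: "b0 > 0" using \<alpha> \<beta> by (auto simp: a0_def b0_def)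
  define Q where "Q = pochhammer [:a0 + real k, 1:] (t - k) * pochhammer [:b0 + real m - real k, -1:] (m - t - l)"
  have polyQ: "poly Q x = pochhammer (a0 + real k + x) (t - k) * pochhammer (b0 + real m - real k - x) (m - t - l)" for x
    by (simp add: Q_def poly_pochhammer algebra_simps)
  have degQ: "degree Q < n"
  proof -
    have "degree Q \<le> degree (pochhammer [:a0 + real k, 1:] (t - k)) + degree (pochhammer [:b0 + real m - real k, -1:] (m - t - l))"
      unfolding Q_def by (rule degree_mult_le)
    also have "\<dots> \<le> (t - k) + (m - t - l)"
      by (intro add_mono degree_pochhammer) auto
    finally have "degree Q \<le> (t - k) + (m - t - l)" .
    moreover have "(t - k) + (m - t - l) < n" using tS klm unfolding n_def by auto
    ultimately show ?thesis by linarith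
  qed
  define y where "y = real h - real k"
  have y: "\<forall>r<n. y \<noteq> real r"
  proof (intro allI impI)
    fix r assume r: "r < n"
    show "y \<noteq> real r"
    proof
      assume "y = real r"
      then have "h = k + r" by (simp add: y_def)
      with r hS klm show False by (auto simp: n_def)
    qed
  qed
  have lag: "poly Q y = (\<Sum>r<n. poly Q (real r) * (-1) ^ r * pochhammer (-y) n
                         / ((real r - y) * fact r * fact (n - 1 - r)))"
    by (rule lagrange[OF degQ y])
  also have "\<dots> = (\<Sum>i=k..m-l. poly Q (real (i - k)) * (-1) ^ (i - k) * pochhammer (real k - real h) n
                         / ((real i - real h) * fact (i - k) * fact (m - l - i)))"
    by (rule sum.reindex_bij_witness[of _ "\<lambda>i. i - k" "\<lambda>r. k + r"])
       (use klm in \<open>auto simp: n_def y_def of_nat_diff add_ac\<close>)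
  finally have lag2: "poly Q y = (\<Sum>i=k..m-l. poly Q (real (i - k)) * (-1) ^ (i - k) * pochhammer (real k - real h) n
                         / ((real i - real h) * fact (i - k) * fact (m - l - i)))" .
  have Qy: "poly Q y = pochhammer (a0 + real h) (t - k) * pochhammer (b0 + real (m - h)) (m - t - l)"
    using hm by (simp add: polyQ y_def of_nat_diff algebra_simps)
  have Qi: "poly Q (real (i - k)) = pochhammer (a0 + real i) (t - k) * pochhammer (b0 + real (m - i)) (m - t - l)"
    if "i \<in> {k..m-l}" for i
  proof -
    have "i \<le> m" "k \<le> i" using that by auto
    then show ?thesis by (simp add: polyQ of_nat_diff algebra_simps)
  qed
  have splitA: "pochhammer a0 (j + t - k) = pochhammer a0 j * pochhammer (a0 + real j) (t - k)" for j
    using pochhammer_product'[of a0 j "t - k"] tS by (simp add: add.commute add.left_commute)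
  have splitB: "pochhammer b0 (2 * m - j - t - l) = pochhammer b0 (m - j) * pochhammer (b0 + real (m - j)) (m - t - l)"
    if "j \<le> m" for j
  proof -
    have "2 * m - j - t - l = (m - j) + (m - t - l)" using that tS klm by auto
    then show ?thesis by (simp add: pochhammer_product')
  qed
  have LHS: "real (m choose h) * pochhammer a0 (h + t - k) * pochhammer b0 (2 * m - h - t - l)
      = real (m choose h) * pochhammer a0 h * pochhammer b0 (m - h) * poly Q y"
    unfolding splitA splitB[OF hm] Qy by (simp add: mult_ac)
  have RHS: "Kcoef m k l \<alpha> \<beta> i h * real (m choose i) * pochhammer a0 (i + t - k) * pochhammer b0 (2 * m - i - t - l)
      = real (m choose h) * pochhammer a0 h * pochhammer b0 (m - h) *
        (poly Q (real (i - k)) * (-1) ^ (i - k) * pochhammer (real k - real h) n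
                         / ((real i - real h) * fact (i - k) * fact (m - l - i)))"
    if i: "i \<in> {k..m-l}" for i
  proof -
    have im: "i \<le> m" using i by auto
    have nz1: "real (m choose i) \<noteq> 0" using im by simp
    have nz2: "pochhammer a0 i \<noteq> 0" using pochhammer_pos[OF a0, of i] by simp
    have nz3: "pochhammer b0 (m - i) \<noteq> 0" using pochhammer_pos[OF b0, of "m - i"] by simp
    have nz4: "real i - real h \<noteq> 0" using i hS by auto
    show ?thesis
      unfolding splitA splitB[OF im] Qi[OF i] Kcoef_def a0_def[symmetric] b0_def[symmetric] n_def
      using nz1 nz2 nz3 nz4 by (simp add: field_simps)
  qed
  show ?thesis
    unfolding a0_def[symmetric] b0_def[symmetric] LHS lag2 sum_distrib_left
    by (rule sum.cong[OF refl], rule RHS[symmetric], assumption)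
qed


lemma pos_not_nonpos_Int: "(x::real) > 0 \<Longrightarrow> x \<notin> \<int>\<^sub>\<le>\<^sub>0"
  using nonpos_Ints_nonpos by fastforce

lemma beta_shift:
  fixes A B :: real
  assumes A: "A > 0" and B: "B > 0"
  shows "Beta (A + real u) (B + real v) = Beta A B * pochhammer A u * pochhammer B v / pochhammer (A + B) (u + v)"
proof -
  have gA: "Gamma (A + real u) = pochhammer A u * Gamma A"
    using pochhammer_Gamma[OF pos_not_nonpos_Int[OF A], of u] Gamma_real_pos[OF A] by simp
  have gB: "Gamma (B + real v) = pochhammer B v * Gamma B"
    using pochhammer_Gamma[OF pos_not_nonpos_Int[OF B], of v] Gamma_real_pos[OF B] by simp
  have AB: "A + B > 0" using A B by simp
  have gAB: "Gamma (A + B + real (u + v)) = pochhammer (A + B) (u + v) * Gamma (A + B)"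
    using pochhammer_Gamma[OF pos_not_nonpos_Int[OF AB], of "u + v"] Gamma_real_pos[OF AB] by simp
  have e: "A + real u + (B + real v) = A + B + real (u + v)" by simp
  have p: "pochhammer (A + B) (u + v) > 0" by (rule pochhammer_pos[OF AB])
  show ?thesis
    unfolding Beta_altdef rGamma_inverse_Gamma e gA gB gAB
    using p Gamma_real_pos[OF AB] by (simp add: field_simps)
qed

lemma gram_formula:
  fixes \<alpha> \<beta> :: real
  assumes \<alpha>: "\<alpha> > -1" and \<beta>: "\<beta> > -1" and klm: "k + l \<le> m" and hm: "h \<le> m" and tS: "t \<in> {k..m-l}"
  shows "wI \<alpha> \<beta> (\<lambda>x. bern m h x * bern m t x) =
     Beta (\<beta> + real k + 1) (\<alpha> + real l + 1) / pochhammer (\<beta> + real k + 1 + (\<alpha> + real l + 1)) (2 * m - k - l)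
     * (real (m choose h) * real (m choose t) * pochhammer (\<beta> + real k + 1) (h + t - k) * pochhammer (\<alpha> + real l + 1) (2 * m - h - t - l))"
proof -
  have tm: "t \<le> m" and kt: "k \<le> t" and tl: "t + l \<le> m" using tS klm by auto
  have "wI \<alpha> \<beta> (\<lambda>x. bern m h x * bern m t x) =
        wI \<alpha> \<beta> (\<lambda>x. (real (m choose h) * real (m choose t)) * (x ^ (h + t) * (1 - x) ^ (2 * m - h - t)))"
  proof -
    have "bern m h x * bern m t x = (real (m choose h) * real (m choose t)) * (x ^ (h + t) * (1 - x) ^ (2 * m - h - t))" for x
    proof -
      have "2 * m - h - t = (m - h) + (m - t)" using hm tm by simp
      then show ?thesis by (simp add: bern_def power_add mult_ac)
    qed
    then show ?thesis by simp
  qed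
  also have "\<dots> = real (m choose h) * real (m choose t) * Beta (\<beta> + real (h + t) + 1) (\<alpha> + real (2 * m - h - t) + 1)"
    by (simp only: wI_cmult wI_beta[OF \<alpha> \<beta>])
  also have "Beta (\<beta> + real (h + t) + 1) (\<alpha> + real (2 * m - h - t) + 1)
      = Beta ((\<beta> + real k + 1) + real (h + t - k)) ((\<alpha> + real l + 1) + real (2 * m - h - t - l))"
  proof -
    have e1: "\<beta> + real (h + t) + 1 = (\<beta> + real k + 1) + real (h + t - k)" using kt by (simp add: of_nat_diff)
    have e2: "\<alpha> + real (2 * m - h - t) + 1 = (\<alpha> + real l + 1) + real (2 * m - h - t - l)"
      using kt tl hm by (simp add: of_nat_diff)
    show ?thesis by (simp only: e1 e2)
  qed
  also have "\<dots> = Beta (\<beta> + real k + 1) (\<alpha> + real l + 1) * pochhammer (\<beta> + real k + 1) (h + t - k)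
     * pochhammer (\<alpha> + real l + 1) (2 * m - h - t - l) / pochhammer (\<beta> + real k + 1 + (\<alpha> + real l + 1)) ((h + t - k) + (2 * m - h - t - l))"
    by (rule beta_shift) (use \<alpha> \<beta> in auto)
  also have "(h + t - k) + (2 * m - h - t - l) = 2 * m - k - l" using kt tl hm by simp
  finally show ?thesis by simp
qed


lemma quad_zero:
  fixes b c :: real
  assumes h: "\<And>t. 0 \<le> t * t * c - 2 * t * b" and c: "0 \<le> c"
  shows "b = 0"
proof -
  define s where "s = 1 / (c + 1)"
  have s: "s > 0" using c by (simp add: s_def)
  have sc: "s * c < 2" using c by (simp add: s_def field_simps)
  have neg: "s * (s * c - 2) < 0" using s sc by (simp add: mult_pos_neg)
  have "(b * s) * (b * s) * c - 2 * (b * s) * b = (b * b) * (s * (s * c - 2))"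
    by (simp add: algebra_simps)
  with h[of "b * s"] have "0 \<le> (b * b) * (s * (s * c - 2))" by simp
  with neg s sc have "b * b \<le> 0" by (auto simp: zero_le_mult_iff)
  then show ?thesis by (auto simp: mult_le_0_iff)
qed

lemma cont_bern: "continuous_on UNIV (bern m j)"
  unfolding bern_def[abs_def] by (intro continuous_intros)

lemma gram_K:
  fixes \<alpha> \<beta> :: real
  assumes \<alpha>: "\<alpha> > -1" and \<beta>: "\<beta> > -1" and klm: "k + l \<le> m" and hm: "h \<le> m"
    and hS: "h \<notin> {k..m-l}" and tS: "t \<in> {k..m-l}"
  shows "wI \<alpha> \<beta> (\<lambda>x. bern m h x * bern m t x)
       = (\<Sum>i=k..m-l. Kcoef m k l \<alpha> \<beta> i h * wI \<alpha> \<beta> (\<lambda>x. bern m i x * bern m t x))"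
proof -
  define Cst where "Cst = Beta (\<beta> + real k + 1) (\<alpha> + real l + 1) / pochhammer (\<beta> + real k + 1 + (\<alpha> + real l + 1)) (2 * m - k - l)"
  have "(\<Sum>i=k..m-l. Kcoef m k l \<alpha> \<beta> i h * wI \<alpha> \<beta> (\<lambda>x. bern m i x * bern m t x))
      = (\<Sum>i=k..m-l. Cst * real (m choose t) * (Kcoef m k l \<alpha> \<beta> i h * real (m choose i) * pochhammer (\<beta> + real k + 1) (i + t - k)
            * pochhammer (\<alpha> + real l + 1) (2 * m - i - t - l)))"
  proof (intro sum.cong refl)
    fix i assume i: "i \<in> {k..m-l}"
    then have im: "i \<le> m" by auto
    show "Kcoef m k l \<alpha> \<beta> i h * wI \<alpha> \<beta> (\<lambda>x. bern m i x * bern m t x) =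
        Cst * real (m choose t) * (Kcoef m k l \<alpha> \<beta> i h * real (m choose i) * pochhammer (\<beta> + real k + 1) (i + t - k)
            * pochhammer (\<alpha> + real l + 1) (2 * m - i - t - l))"
      unfolding gram_formula[OF \<alpha> \<beta> klm im tS] Cst_def by (simp add: mult_ac)
  qed
  also have "\<dots> = Cst * real (m choose t) * (\<Sum>i=k..m-l. Kcoef m k l \<alpha> \<beta> i h * real (m choose i) * pochhammer (\<beta> + real k + 1) (i + t - k)
            * pochhammer (\<alpha> + real l + 1) (2 * m - i - t - l))"
    by (simp add: sum_distrib_left)
  also have "\<dots> = Cst * real (m choose t) * (real (m choose h) * pochhammer (\<beta> + real k + 1) (h + t - k) * pochhammer (\<alpha> + real l + 1) (2 * m - h - t - l))"
    by (simp only: K_identity[OF \<alpha> \<beta> klm hm hS tS])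
  also have "\<dots> = wI \<alpha> \<beta> (\<lambda>x. bern m h x * bern m t x)"
    unfolding gram_formula[OF \<alpha> \<beta> klm hm tS] Cst_def by (simp add: mult_ac)
  finally show ?thesis by simp
qed


lemma wint_BB: "\<alpha> > -1 \<Longrightarrow> \<beta> > -1 \<Longrightarrow> wint \<alpha> \<beta> (\<lambda>x. bern m h x * bern m j x)"
  by (intro wint_cont' continuous_on_mult cont_bern)

lemma poly_bezier_cont: "continuous_on UNIV (\<lambda>x. poly (bezier_poly m p) x)"
  unfolding poly_bezier by (intro continuous_on_sum continuous_on_mult continuous_on_const cont_bern)

lemma normal_eq:
  fixes m k l :: nat and \<alpha> \<beta> :: real and f :: "real \<Rightarrow> real" and a b p :: "nat \<Rightarrow> real"
  assumes klm: "k + l \<le> m"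
    and \<alpha>: "\<alpha> > -1" and \<beta>: "\<beta> > -1"
    and fm: "f \<in> borel_measurable borel"
    and ff: "wint \<alpha> \<beta> (\<lambda>x. f x * f x)"
    and adm: "admissible m k l a b p"
    and opt: "\<And>q. admissible m k l a b q \<Longrightarrow>
               wip \<alpha> \<beta> (\<lambda>x. f x - poly (bezier_poly m p) x) (\<lambda>x. f x - poly (bezier_poly m p) x)
             \<le> wip \<alpha> \<beta> (\<lambda>x. f x - poly (bezier_poly m q) x) (\<lambda>x. f x - poly (bezier_poly m q) x)"
    and j: "j \<in> {k..m-l}"
  shows "wip \<alpha> \<beta> f (bern m j) = (\<Sum>h\<le>m. p h * wI \<alpha> \<beta> (\<lambda>x. bern m h x * bern m j x))"
proof -
  have jm: "j \<le> m" using j by auto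
  define P where "P x = poly (bezier_poly m p) x" for x
  define B where "B = bern m j"
  define u where "u x = f x - P x" for x
  have contP: "continuous_on UNIV P" unfolding P_def by (rule poly_bezier_cont)
  have contB: "continuous_on UNIV B" unfolding B_def by (rule cont_bern)
  have mP: "P \<in> borel_measurable borel" by (rule borel_measurable_continuous_onI[OF contP])
  have mB: "B \<in> borel_measurable borel" by (rule borel_measurable_continuous_onI[OF contB])
  have PP: "wint \<alpha> \<beta> (\<lambda>x. P x * P x)" by (intro wint_cont' \<alpha> \<beta> continuous_on_mult contP)
  have BB: "wint \<alpha> \<beta> (\<lambda>x. B x * B x)" by (intro wint_cont' \<alpha> \<beta> continuous_on_mult contB)
  have fP: "wint \<alpha> \<beta> (\<lambda>x. f x * P x)" by (rule wint_prod[OF fm mP ff PP])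
  have fB: "wint \<alpha> \<beta> (\<lambda>x. f x * B x)" by (rule wint_prod[OF fm mB ff BB])
  have PB: "wint \<alpha> \<beta> (\<lambda>x. P x * B x)" by (intro wint_cont' \<alpha> \<beta> continuous_on_mult contB contP)
  have uu_eq: "(\<lambda>x. u x * u x) = (\<lambda>x. (f x * f x - 2 * (f x * P x)) + P x * P x)"
    by (rule ext) (simp add: u_def algebra_simps)
  have uu: "wint \<alpha> \<beta> (\<lambda>x. u x * u x)"
    unfolding uu_eq by (intro wint_add wint_diff wint_cmult ff fP PP)
  have uB_eq: "(\<lambda>x. u x * B x) = (\<lambda>x. f x * B x - P x * B x)"
    by (rule ext) (simp add: u_def algebra_simps)
  have uB: "wint \<alpha> \<beta> (\<lambda>x. u x * B x)"
    unfolding uB_eq by (intro wint_diff fB PB)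
  have key: "0 \<le> t * t * wI \<alpha> \<beta> (\<lambda>x. B x * B x) - 2 * t * wI \<alpha> \<beta> (\<lambda>x. u x * B x)" for t
  proof -
    define q where "q = (\<lambda>s. p s + (if s = j then t else 0))"
    have admq: "admissible m k l a b q" unfolding q_def by (rule adm_perturb[OF adm j klm])
    have polyq: "poly (bezier_poly m q) x = P x + t * B x" for x
    proof -
      have "poly (bezier_poly m q) x = (\<Sum>i\<le>m. p i * bern m i x) + (\<Sum>i\<le>m. (if i = j then t * bern m i x else 0))"
      proof -
        have "poly (bezier_poly m q) x = (\<Sum>i\<le>m. p i * bern m i x + (if i = j then t * bern m i x else 0))"
          unfolding poly_bezier q_def by (intro sum.cong refl) (simp add: algebra_simps)
        then show ?thesis by (simp only: sum.distrib)
      qed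
      also have "(\<Sum>i\<le>m. (if i = j then t * bern m i x else 0)) = t * B x"
        using jm by (simp add: B_def)
      finally show ?thesis by (simp add: P_def poly_bezier)
    qed
    have e1: "(\<lambda>x. f x - poly (bezier_poly m q) x) = (\<lambda>x. u x - t * B x)"
      by (rule ext) (simp add: polyq u_def)
    have e2: "(\<lambda>x. (u x - t * B x) * (u x - t * B x)) = (\<lambda>x. (u x * u x - (2 * t) * (u x * B x)) + (t * t) * (B x * B x))"
      by (rule ext) (simp add: algebra_simps)
    have "wip \<alpha> \<beta> (\<lambda>x. f x - poly (bezier_poly m p) x) (\<lambda>x. f x - poly (bezier_poly m p) x)
          \<le> wip \<alpha> \<beta> (\<lambda>x. f x - poly (bezier_poly m q) x) (\<lambda>x. f x - poly (bezier_poly m q) x)"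
      by (rule opt[OF admq])
    also have "wip \<alpha> \<beta> (\<lambda>x. f x - poly (bezier_poly m q) x) (\<lambda>x. f x - poly (bezier_poly m q) x)
           = wI \<alpha> \<beta> (\<lambda>x. u x * u x) - 2 * t * wI \<alpha> \<beta> (\<lambda>x. u x * B x) + t * t * wI \<alpha> \<beta> (\<lambda>x. B x * B x)"
      unfolding e1 wip_wI e2
      by (simp add: wI_add wI_diff wint_diff wint_cmult uu uB BB wI_cmult)
    also have "wip \<alpha> \<beta> (\<lambda>x. f x - poly (bezier_poly m p) x) (\<lambda>x. f x - poly (bezier_poly m p) x) = wI \<alpha> \<beta> (\<lambda>x. u x * u x)"
      by (simp add: wip_wI u_def P_def)
    finally show ?thesis by simp
  qed
  have z: "wI \<alpha> \<beta> (\<lambda>x. u x * B x) = 0"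
    by (rule quad_zero[OF key wI_sq_nonneg])
  have "wI \<alpha> \<beta> (\<lambda>x. u x * B x) = wI \<alpha> \<beta> (\<lambda>x. f x * B x) - wI \<alpha> \<beta> (\<lambda>x. P x * B x)"
    unfolding uB_eq by (rule wI_diff[OF fB PB])
  moreover have "wI \<alpha> \<beta> (\<lambda>x. P x * B x) = (\<Sum>h\<le>m. p h * wI \<alpha> \<beta> (\<lambda>x. bern m h x * bern m j x))"
  proof -
    have "(\<lambda>x. P x * B x) = (\<lambda>x. \<Sum>h\<le>m. p h * (bern m h x * bern m j x))"
      by (rule ext) (simp add: P_def B_def poly_bezier sum_distrib_left sum_distrib_right mult_ac)
    then show ?thesis
      by (simp add: wI_sum wint_cmult wint_BB[OF \<alpha> \<beta>] wI_cmult)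
  qed
  ultimately show ?thesis using z by (simp add: wip_wI B_def)
qed


lemma wip_comb:
  assumes \<alpha>: "\<alpha> > -1" and \<beta>: "\<beta> > -1"
  shows "wip \<alpha> \<beta> (\<lambda>x. \<Sum>h=k..m-l. c h * bern m h x) (bern m j)
       = (\<Sum>h=k..m-l. c h * wI \<alpha> \<beta> (\<lambda>x. bern m h x * bern m j x))"
proof -
  have "(\<lambda>x. (\<Sum>h=k..m-l. c h * bern m h x) * bern m j x) = (\<lambda>x. \<Sum>h=k..m-l. c h * (bern m h x * bern m j x))"
    by (rule ext) (simp add: sum_distrib_left sum_distrib_right mult_ac)
  then show ?thesis
    by (simp add: wip_wI wI_sum wint_cmult wint_BB[OF \<alpha> \<beta>] wI_cmult)
qed

lemma inj_S:
  fixes \<alpha> \<beta> :: real and c :: "nat \<Rightarrow> real"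
  assumes \<alpha>: "\<alpha> > -1" and \<beta>: "\<beta> > -1" and klm: "k + l \<le> m"
    and hom: "\<forall>j\<in>{k..m-l}. (\<Sum>h=k..m-l. c h * wI \<alpha> \<beta> (\<lambda>x. bern m h x * bern m j x)) = 0"
  shows "\<forall>h\<in>{k..m-l}. c h = 0"
proof -
  define q where "q = (\<Sum>h=k..m-l. Polynomial.smult (c h) (bern_poly m h))"
  have polyq: "poly q x = (\<Sum>h=k..m-l. c h * bern m h x)" for x
    by (simp add: q_def poly_sum)
  have "(\<lambda>x. poly q x * poly q x) = (\<lambda>x. \<Sum>j=k..m-l. \<Sum>h=k..m-l. (c j * c h) * (bern m h x * bern m j x))"
    by (rule ext) (simp add: polyq sum_product mult_ac)
  then have "wI \<alpha> \<beta> (\<lambda>x. poly q x * poly q x) = (\<Sum>j=k..m-l. \<Sum>h=k..m-l. (c j * c h) * wI \<alpha> \<beta> (\<lambda>x. bern m h x * bern m j x))"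
    by (simp add: wI_sum wint_sum wint_cmult wint_BB[OF \<alpha> \<beta>] wI_cmult)
  also have "\<dots> = (\<Sum>j=k..m-l. c j * (\<Sum>h=k..m-l. c h * wI \<alpha> \<beta> (\<lambda>x. bern m h x * bern m j x)))"
    by (simp add: sum_distrib_left mult_ac)
  also have "\<dots> = 0" using hom by simp
  finally have "q = 0" by (rule wI_sq_zero[OF \<alpha> \<beta>])
  define c' where "c' i = (if i \<in> {k..m-l} then c i else 0)" for i
  have "bezier_poly m c' = q"
  proof -
    have "bezier_poly m c' = (\<Sum>i\<le>m. Polynomial.smult (c' i) (bern_poly m i))" by (simp add: bezier_poly_def)
    also have "\<dots> = (\<Sum>i\<in>{k..m-l}. Polynomial.smult (c' i) (bern_poly m i))"
      by (rule sum.mono_neutral_right) (auto simp: c'_def)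
    also have "\<dots> = q" by (simp add: q_def c'_def)
    finally show ?thesis .
  qed
  with \<open>q = 0\<close> have cz: "\<forall>i\<le>m. c' i = 0" by (intro bezier_zero) simp
  show ?thesis
  proof
    fix h assume h: "h \<in> {k..m-l}"
    then have "h \<le> m" by auto
    with cz have "c' h = 0" by blast
    with h show "c h = 0" by (simp add: c'_def)
  qed
qed

lemma dual_ex1:
  fixes \<alpha> \<beta> :: real
  assumes \<alpha>: "\<alpha> > -1" and \<beta>: "\<beta> > -1" and klm: "k + l \<le> m" and i: "i \<in> {k..m-l}"
  shows "\<exists>!c. (\<forall>h. h \<notin> {k..m-l} \<longrightarrow> c h = 0) \<and>
      (\<forall>j\<in>{k..m-l}. wip \<alpha> \<beta> (\<lambda>x. \<Sum>h=k..m-l. c h * bern m h x) (bern m j)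
                      = (if i = j then 1 else 0))"
proof -
  define G where "G h j = wI \<alpha> \<beta> (\<lambda>x. bern m h x * bern m j x)" for h j
  define n where "n = m - l - k + 1"
  have reidx: "(\<Sum>h=k..m-l. g h) = (\<Sum>b<n. g (k + b))" for g :: "nat \<Rightarrow> real"
    by (rule sum.reindex_bij_witness[of _ "\<lambda>b. k + b" "\<lambda>h. h - k"]) (use klm in \<open>auto simp: n_def\<close>)
  have inj: "\<forall>b<n. v b = 0" if hv: "\<forall>j<n. (\<Sum>b<n. v b * G (k + b) (k + j)) = 0" for v
  proof -
    define c where "c h = v (h - k)" for h
    have "\<forall>j\<in>{k..m-l}. (\<Sum>h=k..m-l. c h * wI \<alpha> \<beta> (\<lambda>x. bern m h x * bern m j x)) = 0"
    proof
      fix j assume j: "j \<in> {k..m-l}"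
      have "(\<Sum>h=k..m-l. c h * wI \<alpha> \<beta> (\<lambda>x. bern m h x * bern m j x)) = (\<Sum>b<n. v b * G (k + b) (k + (j - k)))"
        unfolding reidx using j by (simp add: c_def G_def)
      also have "\<dots> = 0"
      proof -
        have jn: "j - k < n" using j klm by (auto simp: n_def)
        show ?thesis by (rule hv[rule_format, OF jn])
      qed
      finally show "(\<Sum>h=k..m-l. c h * wI \<alpha> \<beta> (\<lambda>x. bern m h x * bern m j x)) = 0" .
    qed
    then have hc: "\<forall>h\<in>{k..m-l}. c h = 0" by (rule inj_S[OF \<alpha> \<beta> klm])
    show ?thesis
    proof (intro allI impI)
      fix b assume "b < n"
      then have "k + b \<in> {k..m-l}" using klm by (auto simp: n_def)
      with hc have "c (k + b) = 0" by blast
      then show "v b = 0" by (simp add: c_def)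
    qed
  qed
  obtain v where v: "\<forall>j<n. (\<Sum>b<n. v b * G (k + b) (k + j)) = (if i = k + j then 1 else 0)"
    using gram_solve[of n "\<lambda>b j. G (k + b) (k + j)" "\<lambda>j. if i = k + j then 1 else 0"] inj by blast
  define c where "c h = (if h \<in> {k..m-l} then v (h - k) else 0)" for h
  have ex: "(\<forall>h. h \<notin> {k..m-l} \<longrightarrow> c h = 0) \<and>
      (\<forall>j\<in>{k..m-l}. wip \<alpha> \<beta> (\<lambda>x. \<Sum>h=k..m-l. c h * bern m h x) (bern m j)
                      = (if i = j then 1 else 0))"
  proof (intro conjI allI impI ballI)
    fix h assume "h \<notin> {k..m-l}" then show "c h = 0" by (auto simp: c_def)
  next
    fix j assume j: "j \<in> {k..m-l}"
    have "wip \<alpha> \<beta> (\<lambda>x. \<Sum>h=k..m-l. c h * bern m h x) (bern m j) = (\<Sum>h=k..m-l. c h * G h j)"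
      by (simp add: wip_comb[OF \<alpha> \<beta>] G_def)
    also have "\<dots> = (\<Sum>b<n. v b * G (k + b) (k + (j - k)))"
      unfolding reidx using j klm by (intro sum.cong) (auto simp: c_def n_def)
    also have "\<dots> = (if i = k + (j - k) then 1 else 0)"
    proof -
      have jn: "j - k < n" using j klm by (auto simp: n_def)
      show ?thesis by (rule v[rule_format, OF jn])
    qed
    also have "\<dots> = (if i = j then 1 else 0)" using j by auto
    finally show "wip \<alpha> \<beta> (\<lambda>x. \<Sum>h=k..m-l. c h * bern m h x) (bern m j) = (if i = j then 1 else 0)" .
  qed
  show ?thesis
  proof (rule ex1I[of _ c])
    show "(\<forall>h. h \<notin> {k..m-l} \<longrightarrow> c h = 0) \<and>
      (\<forall>j\<in>{k..m-l}. wip \<alpha> \<beta> (\<lambda>x. \<Sum>h=k..m-l. c h * bern m h x) (bern m j)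
                      = (if i = j then 1 else 0))" by (rule ex)
  next
    fix d assume d: "(\<forall>h. h \<notin> {k..m-l} \<longrightarrow> d h = 0) \<and>
      (\<forall>j\<in>{k..m-l}. wip \<alpha> \<beta> (\<lambda>x. \<Sum>h=k..m-l. d h * bern m h x) (bern m j)
                      = (if i = j then 1 else 0))"
    have "\<forall>j\<in>{k..m-l}. (\<Sum>h=k..m-l. (d h - c h) * wI \<alpha> \<beta> (\<lambda>x. bern m h x * bern m j x)) = 0"
    proof
      fix j assume j: "j \<in> {k..m-l}"
      have "(\<Sum>h=k..m-l. (d h - c h) * wI \<alpha> \<beta> (\<lambda>x. bern m h x * bern m j x))
          = wip \<alpha> \<beta> (\<lambda>x. \<Sum>h=k..m-l. d h * bern m h x) (bern m j) - wip \<alpha> \<beta> (\<lambda>x. \<Sum>h=k..m-l. c h * bern m h x) (bern m j)"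
        by (simp add: wip_comb[OF \<alpha> \<beta>] sum_subtractf left_diff_distrib)
      also have "\<dots> = 0" using d ex j by simp
      finally show "(\<Sum>h=k..m-l. (d h - c h) * wI \<alpha> \<beta> (\<lambda>x. bern m h x * bern m j x)) = 0" .
    qed
    then have "\<forall>h\<in>{k..m-l}. d h - c h = 0" by (rule inj_S[OF \<alpha> \<beta> klm])
    then show "d = c" using d ex by (intro ext) (metis eq_iff_diff_eq_0)
  qed
qed


theorem theorem4p1:
  fixes m k l :: nat and \<alpha> \<beta> :: real
    and f :: "real \<Rightarrow> real" and a b :: "nat \<Rightarrow> real" and p :: "nat \<Rightarrow> real"
  assumes klm: "k + l \<le> m"
    and \<alpha>: "\<alpha> > -1" and \<beta>: "\<beta> > -1"
    and f_meas: "f \<in> borel_measurable borel"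
    and f_L2: "set_integrable lborel {0..1} (\<lambda>x. jweight \<alpha> \<beta> x * f x * f x)"
    and adm: "admissible m k l a b p"
    and opt: "\<And>q. admissible m k l a b q \<Longrightarrow>
               wip \<alpha> \<beta> (\<lambda>x. f x - poly (bezier_poly m p) x) (\<lambda>x. f x - poly (bezier_poly m p) x)
             \<le> wip \<alpha> \<beta> (\<lambda>x. f x - poly (bezier_poly m q) x) (\<lambda>x. f x - poly (bezier_poly m q) x)"
  shows "(\<forall>i<k. p i = fact (m - i) / fact m * a i
                       - (\<Sum>j<i. (-1) ^ (i + j) * real (i choose j) * p j))
       \<and> (\<forall>i<l. p (m - i) = (-1) ^ i * fact (m - i) / fact m * b i
                       - (\<Sum>j=1..i. (-1) ^ j * real (i choose j) * p (m - i + j)))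
       \<and> (\<forall>i\<in>{k..m-l}. p i = (\<Sum>j=k..m-l. dualC m k l \<alpha> \<beta> i j * wip \<alpha> \<beta> f (bern m j))
                       - ((\<Sum>j<k. p j * Kcoef m k l \<alpha> \<beta> i j)
                          + (\<Sum>j=m-l+1..m. p j * Kcoef m k l \<alpha> \<beta> i j)))"
proof (intro conjI allI impI ballI)
  fix i assume i: "i < k"
  show "p i = fact (m - i) / fact m * a i - (\<Sum>j<i. (-1) ^ (i + j) * real (i choose j) * p j)"
    by (rule part1[OF adm i]) (use klm in simp)
next
  fix i assume i: "i < l"
  show "p (m - i) = (-1) ^ i * fact (m - i) / fact m * b i
                       - (\<Sum>j=1..i. (-1) ^ j * real (i choose j) * p (m - i + j))"
    by (rule part2[OF adm i]) (use klm in simp)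
next
  fix i assume i: "i \<in> {k..m-l}"
  define S where "S = {k..m-l}"
  define G where "G h j = wI \<alpha> \<beta> (\<lambda>x. bern m h x * bern m j x)" for h j
  have Gsym: "G h j = G j h" for h j by (simp add: G_def mult.commute)
  define c where "c = dualC m k l \<alpha> \<beta> i"
  have Pc: "(\<forall>h. h \<notin> {k..m-l} \<longrightarrow> c h = 0) \<and>
      (\<forall>j\<in>{k..m-l}. wip \<alpha> \<beta> (\<lambda>x. \<Sum>h=k..m-l. c h * bern m h x) (bern m j)
                      = (if i = j then 1 else 0))"
    unfolding c_def dualC_def by (rule theI'[OF dual_ex1[OF \<alpha> \<beta> klm i]])
  have dual: "(\<Sum>h\<in>S. c h * G h j) = (if i = j then 1 else 0)" if j: "j \<in> S" for j
    using Pc j by (simp add: wip_comb[OF \<alpha> \<beta>] G_def S_def)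
  have ff: "wint \<alpha> \<beta> (\<lambda>x. f x * f x)"
    using f_L2 by (simp add: wint_def set_integrable_def mult.assoc)
  have NE: "wip \<alpha> \<beta> f (bern m j) = (\<Sum>h\<le>m. p h * G h j)" if "j \<in> S" for j
  proof -
    have j: "j \<in> {k..m-l}" using that by (simp add: S_def)
    show ?thesis unfolding G_def by (rule normal_eq[OF klm \<alpha> \<beta> f_meas ff adm opt j])
  qed
  define V where "V h = (\<Sum>j\<in>S. c j * G h j)" for h
  have VS: "V h = (if i = h then 1 else 0)" if "h \<in> S" for h
    using dual[OF that] by (simp add: V_def Gsym)
  have VK: "V h = Kcoef m k l \<alpha> \<beta> i h" if h: "h \<le> m" "h \<notin> S" for h
  proof -
    have "V h = (\<Sum>j\<in>S. c j * (\<Sum>i'\<in>S. Kcoef m k l \<alpha> \<beta> i' h * G i' j))"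
      unfolding V_def S_def G_def using h
      by (intro sum.cong refl) (simp add: gram_K[OF \<alpha> \<beta> klm] S_def)
    also have "\<dots> = (\<Sum>j\<in>S. \<Sum>i'\<in>S. Kcoef m k l \<alpha> \<beta> i' h * (c j * G j i'))"
      by (intro sum.cong refl) (simp add: sum_distrib_left Gsym mult_ac)
    also have "\<dots> = (\<Sum>i'\<in>S. \<Sum>j\<in>S. Kcoef m k l \<alpha> \<beta> i' h * (c j * G j i'))"
      by (rule sum.swap)
    also have "\<dots> = (\<Sum>i'\<in>S. Kcoef m k l \<alpha> \<beta> i' h * (\<Sum>j\<in>S. c j * G j i'))"
      by (simp add: sum_distrib_left)
    also have "\<dots> = (\<Sum>i'\<in>S. if i' = i then Kcoef m k l \<alpha> \<beta> i' h else 0)"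
      by (intro sum.cong refl) (simp add: dual)
    also have "\<dots> = Kcoef m k l \<alpha> \<beta> i h" using i by (simp add: S_def)
    finally show ?thesis .
  qed
  have "(\<Sum>j\<in>S. c j * wip \<alpha> \<beta> f (bern m j)) = (\<Sum>j\<in>S. c j * (\<Sum>h\<le>m. p h * G h j))"
    by (intro sum.cong refl) (simp add: NE)
  also have "\<dots> = (\<Sum>j\<in>S. \<Sum>h\<le>m. p h * (c j * G h j))"
    by (intro sum.cong refl) (simp add: sum_distrib_left mult_ac)
  also have "\<dots> = (\<Sum>h\<le>m. \<Sum>j\<in>S. p h * (c j * G h j))"
    by (rule sum.swap)
  also have "\<dots> = (\<Sum>h\<le>m. p h * V h)"
    by (simp add: V_def sum_distrib_left)
  also have "\<dots> = (\<Sum>h<k. p h * V h) + (\<Sum>h\<in>S. p h * V h) + (\<Sum>h=m-l+1..m. p h * V h)"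
  proof -
    have e: "{..m} = {..<k} \<union> (S \<union> {m-l+1..m})" using klm by (auto simp: S_def)
    have "(\<Sum>h\<in>{..<k} \<union> (S \<union> {m-l+1..m}). p h * V h) = (\<Sum>h<k. p h * V h) + (\<Sum>h\<in>S \<union> {m-l+1..m}. p h * V h)"
      by (rule sum.union_disjoint) (use klm in \<open>auto simp: S_def\<close>)
    also have "(\<Sum>h\<in>S \<union> {m-l+1..m}. p h * V h) = (\<Sum>h\<in>S. p h * V h) + (\<Sum>h=m-l+1..m. p h * V h)"
      by (rule sum.union_disjoint) (auto simp: S_def)
    finally show ?thesis unfolding e by (simp add: add.assoc)
  qed
  also have "(\<Sum>h\<in>S. p h * V h) = p i"
  proof -
    have "(\<Sum>h\<in>S. p h * V h) = (\<Sum>h\<in>S. if h = i then p h else 0)"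
      by (intro sum.cong refl) (simp add: VS)
    also have "\<dots> = p i" using i by (simp add: S_def)
    finally show ?thesis .
  qed
  also have "(\<Sum>h<k. p h * V h) = (\<Sum>h<k. p h * Kcoef m k l \<alpha> \<beta> i h)"
    using klm by (intro sum.cong refl) (simp add: VK S_def)
  also have "(\<Sum>h=m-l+1..m. p h * V h) = (\<Sum>h=m-l+1..m. p h * Kcoef m k l \<alpha> \<beta> i h)"
    using klm by (intro sum.cong refl) (simp add: VK S_def)
  finally have "(\<Sum>j\<in>S. c j * wip \<alpha> \<beta> f (bern m j)) =
       (\<Sum>h<k. p h * Kcoef m k l \<alpha> \<beta> i h) + p i + (\<Sum>h=m-l+1..m. p h * Kcoef m k l \<alpha> \<beta> i h)" .
  then show "p i = (\<Sum>j=k..m-l. dualC m k l \<alpha> \<beta> i j * wip \<alpha> \<beta> f (bern m j))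
                       - ((\<Sum>j<k. p j * Kcoef m k l \<alpha> \<beta> i j)
                          + (\<Sum>j=m-l+1..m. p j * Kcoef m k l \<alpha> \<beta> i j))"
    by (simp add: S_def c_def)
qed


end
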